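(* In the setting below with $P=\mathfrak A$ and the absolute error criterion, assume $\lambda\in\ell_{\tau_0}$ for some $\tau_0\in(0,\infty)$. Then: (i) if $\lambda_1<1$, $\{S_d\}$ is strongly polynomially tractable, independently of the choice of the sets $I_d$; (ii) if $\lambda_1\ge1$ and there exist $\tau\ge\tau_0$ and $d_0\in\mathbb N$ such that $$\frac{\ln(a_d!)}{d}\ge\ln\big(\|\lambda\|_{\ell_\tau}^\tau\big)\quad\text{for all }d\ge d_0,$$ then $\{S_d\}$ is strongly polynomially tractable.
   Context: Setting: $S_1:H_1\to G_1$ is a compact linear operator between real Hilbert spaces ($H_1$ infinite-dimensional separable); $\lambda=(\lambda_m)_{m\in\mathbb N}$, $\lambda_1\ge\lambda_2\ge\dots\ge0$, are the eigenvalues of $S_1^\dagger S_1$. $S_d=S_1^{\otimes d}:H_1^{\otimes d}\to G_1^{\otimes d}$. For each $d$ fix $\emptyset\ne I_d=\{i_1<\dots<i_{a_d}\}\subset\{1,\dots,d\}$ ($I_1=\{1\}$), put $a_d=\#I_d$, $b_d=d-a_d$, and fix one type $P\in\{\mathfrak S,\mathfrak A\}$ for all $d$; the problem $\{S_d\}$ is the family of restrictions of $S_d$ to the $I_d$-symmetric subspace (if $P=\mathfrak S$) or $I_d$-antisymmetric subspace (if $P=\mathfrak A$) of $H_1^{\otimes d}$, i.e. the range of $\frac1{a_d!}\sum_{\pi}(\pm1)U_\pi$, the sum over permutations $\pi$ of $\{1,\dots,d\}$ fixing all points outside $I_d$, $U_\pi(f_1\otimes\cdots\otimes f_d)=f_{\pi(1)}\otimes\cdots\otimes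 f_{\pi(d)}$, sign $(-1)^{|\pi|}$ used for $\mathfrak A$. Let $\nabla_d=\{k\in\mathbb N^d:k_{i_1}\le\dots\le k_{i_{a_d}}\}$ for $P=\mathfrak S$ and with strict inequalities for $P=\mathfrak A$; $\lambda_{d,k}=\prod_{l=1}^d\lambda_{k_l}$; $\psi:\mathbb N\to\nabla_d$ a bijection with $\lambda_{d,\psi(1)}\ge\lambda_{d,\psi(2)}\ge\cdots$. These are exactly the eigenvalues of $S_d^\dagger S_d$ on the subspace, and the information complexity (absolute error) is $n(\epsilon,d)=\#\{k\in\nabla_d:\lambda_{d,k}>\epsilon^2\}$, the initial error $\epsilon^{\rm init}_d=\sqrt{\lambda_{d,\psi(1)}}$ (equal to $\lambda_1^{d/2}$ if $P=\mathfrak S$, and $\sqrt{\lambda_1^{b_d}\lambda_1\lambda_2\cdots\lambda_{a_d}}$ if $P=\mathfrak A$). Polynomially tractable: $\exists C,p>0,q\ge0$ with $n(\epsilon,d)\le C\epsilon^{-p}d^q$ for all $d\in\mathbb N,\epsilon\in(0,1]$; strongly polynomially tractable: this with $q=0$. Standing assumptions: $\lambda_2>0$ and $\epsilon_d^{\rm init}>0$ for all $d$. $\ell_\tau$: sequences with $\|\lambda\|_{\ell_\tau}^\tau=\sum_m\lambda_m^\tau<\infty$. *)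

theory Defs
  imports "HOL-Analysis.Analysis"
begin

text \<open>Eigenvalue sequence: lam m for m = 1, 2, ... (the value lam 0 is unused).  A multi-index k \<in> \<nabla>_d is a function
  nat \<Rightarrow> nat, positive on {1..d} and 0 outside (to make it a canonical representative).\<close>

definition admissible_eigs :: "(nat \<Rightarrow> real) \<Rightarrow> bool" where
  "admissible_eigs lam \<longleftrightarrow> (\<forall>m\<ge>1. lam m \<ge> 0) \<and> (\<forall>m\<ge>1. lam (Suc m) \<le> lam m)"

definition admissible_index_sets :: "(nat \<Rightarrow> nat set) \<Rightarrow> bool" where
  "admissible_index_sets I \<longleftrightarrow> I 1 = {1} \<and> (\<forall>d\<ge>1. I d \<noteq> {} \<and> I d \<subseteq> {1..d})"

definition nabla_anti :: "(nat \<Rightarrow> nat set) \<Rightarrow> nat \<Rightarrow> (nat \<Rightarrow> nat) set" where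
  "nabla_anti I d = {k. (\<forall>l\<in>{1..d}. 1 \<le> k l) \<and> (\<forall>l. l \<notin> {1..d} \<longrightarrow> k l = 0)
       \<and> (\<forall>i\<in>I d. \<forall>j\<in>I d. i < j \<longrightarrow> k i < k j)}"

definition lam_d :: "(nat \<Rightarrow> real) \<Rightarrow> nat \<Rightarrow> (nat \<Rightarrow> nat) \<Rightarrow> real" where
  "lam_d lam d k = (\<Prod>l\<in>{1..d}. lam (k l))"

text \<open>The set whose cardinality is the information complexity n(\<epsilon>,d) (absolute error).\<close>
definition info_set_anti :: "(nat \<Rightarrow> real) \<Rightarrow> (nat \<Rightarrow> nat set) \<Rightarrow> real \<Rightarrow> nat \<Rightarrow> (nat \<Rightarrow> nat) set" where
  "info_set_anti lam I \<epsilon> d = {k \<in> nabla_anti I d. lam_d lam d k > \<epsilon>\<^sup>2}"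

definition info_compl_anti :: "(nat \<Rightarrow> real) \<Rightarrow> (nat \<Rightarrow> nat set) \<Rightarrow> real \<Rightarrow> nat \<Rightarrow> nat" where
  "info_compl_anti lam I \<epsilon> d = card (info_set_anti lam I \<epsilon> d)"

text \<open>Strong polynomial tractability (finiteness made explicit since card of an infinite set is 0).\<close>
definition strongly_poly_tractable_anti :: "(nat \<Rightarrow> real) \<Rightarrow> (nat \<Rightarrow> nat set) \<Rightarrow> bool" where
  "strongly_poly_tractable_anti lam I \<longleftrightarrow>
     (\<exists>C p. C > 0 \<and> p > 0 \<and> (\<forall>d\<ge>1. \<forall>\<epsilon>. 0 < \<epsilon> \<and> \<epsilon> \<le> 1 \<longrightarrow>
        finite (info_set_anti lam I \<epsilon> d) \<and> real (info_compl_anti lam I \<epsilon> d) \<le> C * \<epsilon> powr (-p)))"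

definition in_ell :: "real \<Rightarrow> (nat \<Rightarrow> real) \<Rightarrow> bool" where
  "in_ell \<tau> lam \<longleftrightarrow> summable (\<lambda>m. lam (Suc m) powr \<tau>)"

definition ell_norm_pow :: "real \<Rightarrow> (nat \<Rightarrow> real) \<Rightarrow> real" where
  "ell_norm_pow \<tau> lam = (\<Sum>m. lam (Suc m) powr \<tau>)"

definition init_err_sq_anti :: "(nat \<Rightarrow> real) \<Rightarrow> (nat \<Rightarrow> nat set) \<Rightarrow> nat \<Rightarrow> real" where
  "init_err_sq_anti lam I d = lam 1 ^ (d - card (I d)) * (\<Prod>m\<in>{1..card (I d)}. lam m)"

end

theory Submission imports Defs "HOL-Combinatorics.Permutations" begin

lemma mono_perm_id:
  fixes \<rho> :: "nat \<Rightarrow> nat"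
  assumes p: "\<rho> permutes A" and m: "\<forall>i\<in>A. \<forall>j\<in>A. i < j \<longrightarrow> \<rho> i < \<rho> j"
  shows "\<rho> = id"
proof -
  have "\<forall>i\<in>A. i \<le> \<rho> i"
  proof
    fix i show "i \<in> A \<Longrightarrow> i \<le> \<rho> i"
    proof (induction i rule: less_induct)
      case (less i)
      show ?case
      proof (rule ccontr)
        assume "\<not> i \<le> \<rho> i" hence lt: "\<rho> i < i" by simp
        have rA: "\<rho> i \<in> A" using permutes_in_image[OF p] less.prems by simp
        have "\<rho> i \<le> \<rho> (\<rho> i)" using less.IH[OF lt rA] .
        moreover have "\<rho> (\<rho> i) < \<rho> i" using m rA less.prems lt by blast
        ultimately show False by simp
      qed
    qed
  qed
  thus ?thesis using permutes_natset_ge[OF p] by blast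
qed

lemma key:
  fixes \<mu> :: "nat \<Rightarrow> real"
  assumes Isub: "I d \<subseteq> {1..d}" and finF: "finite F" and Fsub: "F \<subseteq> nabla_anti I d"
    and nn: "\<And>m. \<mu> m \<ge> 0" and sm: "summable (\<lambda>m. \<mu> (Suc m))"
  shows "fact (card (I d)) * (\<Sum>k\<in>F. \<Prod>l\<in>{1..d}. \<mu> (k l)) \<le> (\<Sum>m. \<mu> (Suc m)) ^ d"
proof -
  define A where "A = I d"
  have finA: "finite A" using Isub A_def finite_subset by blast
  define P where "P = {\<pi>. \<pi> permutes A}"
  have finP: "finite P" using finite_permutations[OF finA] P_def by simp
  have cardP: "card P = fact (card A)" using card_permutations[OF refl finA] P_def by simp
  define g where "g = (\<lambda>k::nat\<Rightarrow>nat. \<Prod>l\<in>{1..d}. \<mu> (k l))"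
  have gnn: "\<And>k. g k \<ge> 0" unfolding g_def using nn by (simp add: prod_nonneg)
  have gperm: "g (k \<circ> \<pi>) = g k" if "\<pi> \<in> P" for k \<pi>
  proof -
    have "\<pi> permutes {1..d}" using that P_def A_def Isub permutes_subset by blast
    from prod.permute[OF this, of "\<lambda>l. \<mu> (k l)"]
    show ?thesis unfolding g_def by (simp add: o_def)
  qed
  have mono: "\<forall>i\<in>A. \<forall>j\<in>A. i < j \<longrightarrow> k i < k j" if "k \<in> F" for k
    using that Fsub unfolding nabla_anti_def A_def by blast
  define \<Phi> where "\<Phi> = (\<lambda>(\<pi>::nat\<Rightarrow>nat, k::nat\<Rightarrow>nat). k \<circ> \<pi>)"
  have inj: "inj_on \<Phi> (P \<times> F)"
  proof (rule inj_onI, clarify)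
    fix \<pi> k \<sigma> k'
    assume pP: "\<pi> \<in> P" and kF: "k \<in> F" and sP: "\<sigma> \<in> P" and k'F: "k' \<in> F"
      and eq: "\<Phi> (\<pi>, k) = \<Phi> (\<sigma>, k')"
    have pp: "\<pi> permutes A" and sp: "\<sigma> permutes A" using pP sP P_def by auto
    have eq': "k (\<pi> x) = k' (\<sigma> x)" for x proof -
      have "(k \<circ> \<pi>) x = (k' \<circ> \<sigma>) x" using eq unfolding \<Phi>_def by simp
      thus ?thesis by simp
    qed
    define \<rho> where "\<rho> = \<sigma> \<circ> inv \<pi>"
    have rp: "\<rho> permutes A" unfolding \<rho>_def by (rule permutes_compose[OF permutes_inv[OF pp] sp])
    have keq: "k x = k' (\<rho> x)" for x
      using eq'[of "inv \<pi> x"] permutes_inverses(1)[OF pp] unfolding \<rho>_def by simp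
    have "\<forall>i\<in>A. \<forall>j\<in>A. i < j \<longrightarrow> \<rho> i < \<rho> j"
    proof (intro ballI impI)
      fix i j assume iA: "i \<in> A" and jA: "j \<in> A" and ij: "i < j"
      have "k' (\<rho> i) < k' (\<rho> j)" using mono[OF kF] iA jA ij keq[of i] keq[of j] by metis
      moreover have "\<rho> i \<in> A" "\<rho> j \<in> A" using permutes_in_image[OF rp] iA jA by auto
      ultimately show "\<rho> i < \<rho> j"
      proof -
        assume c: "k' (\<rho> i) < k' (\<rho> j)" and a: "\<rho> i \<in> A" and b: "\<rho> j \<in> A"
        show "\<rho> i < \<rho> j"
        proof (rule ccontr)
          assume "\<not> \<rho> i < \<rho> j"
          hence "\<rho> j < \<rho> i \<or> \<rho> j = \<rho> i" by auto
          thus False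
          proof
            assume "\<rho> j < \<rho> i"
            hence "k' (\<rho> j) < k' (\<rho> i)" using mono[OF k'F] a b by blast
            thus False using c by simp
          next
            assume "\<rho> j = \<rho> i" thus False using c by simp
          qed
        qed
      qed
    qed
    hence rid: "\<rho> = id" using mono_perm_id[OF rp] by blast
    have "\<sigma> x = \<pi> x" for x
    proof -
      have "\<sigma> x = \<rho> (\<pi> x)" unfolding \<rho>_def using permutes_inverses(2)[OF pp] by simp
      thus ?thesis using rid by simp
    qed
    hence "\<sigma> = \<pi>" by blast
    moreover have "k = k'" using keq rid by auto
    ultimately show "\<pi> = \<sigma> \<and> k = k'" by simp
  qed
  define N where "N = (\<Sum>k\<in>F. \<Sum>l\<in>{1..d}. k l)"
  define Z where "Z = {h::nat\<Rightarrow>nat. (\<forall>l\<in>{1..d}. h l \<in> {1..N}) \<and> (\<forall>l. l \<notin> {1..d} \<longrightarrow> h l = 0)}"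
  define r where "r = (\<lambda>(f::nat\<Rightarrow>nat) l. if l \<in> {1..d} then f l else 0)"
  define Q where "Q = PiE {1..d} (\<lambda>_. {1..N})"
  have injr: "inj_on r Q"
  proof (rule inj_onI)
    fix f f' assume "f \<in> Q" "f' \<in> Q" "r f = r f'"
    thus "f = f'" unfolding Q_def r_def
      by (intro PiE_ext[of f "{1..d}" "\<lambda>_. {1..N}" f']) (auto simp: fun_eq_iff split: if_splits)
  qed
  have ZQ: "Z = r ` Q"
  proof
    show "r ` Q \<subseteq> Z" unfolding Z_def r_def Q_def by (auto simp: PiE_iff)
    show "Z \<subseteq> r ` Q"
    proof
      fix h assume hZ: "h \<in> Z"
      have "h = r (restrict h {1..d})" using hZ unfolding Z_def r_def by (auto simp: fun_eq_iff)
      moreover have "restrict h {1..d} \<in> Q" using hZ unfolding Z_def Q_def by auto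
      ultimately show "h \<in> r ` Q" by blast
    qed
  qed
  have finQ: "finite Q" unfolding Q_def by (simp add: finite_PiE)
  have finZ: "finite Z" using ZQ finQ by simp
  have sub: "\<Phi> ` (P \<times> F) \<subseteq> Z"
  proof clarify
    fix \<pi> k assume pP: "\<pi> \<in> P" and kF: "k \<in> F"
    have pp: "\<pi> permutes A" using pP P_def by auto
    have kn: "k \<in> nabla_anti I d" using kF Fsub by blast
    have A1: "k (\<pi> l) \<in> {1..N}" if l: "l \<in> {1..d}" for l
    proof -
      have pl: "\<pi> l \<in> {1..d}"
      proof (cases "l \<in> A")
        case True thus ?thesis using permutes_in_image[OF pp] Isub A_def by blast
      next
        case False thus ?thesis using permutes_not_in[OF pp] l by simp
      qed
      have "1 \<le> k (\<pi> l)" using kn pl unfolding nabla_anti_def by auto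
      moreover have "k (\<pi> l) \<le> (\<Sum>l\<in>{1..d}. k l)" using pl by (intro member_le_sum) auto
      moreover have "(\<Sum>l\<in>{1..d}. k l) \<le> N" unfolding N_def using kF finF
        by (intro member_le_sum[of k F "\<lambda>k. \<Sum>l\<in>{1..d}. k l"]) auto
      ultimately show ?thesis by auto
    qed
    have A2: "k (\<pi> l) = 0" if l: "l \<notin> {1..d}" for l
    proof -
      have "l \<notin> A" using l Isub A_def by blast
      hence "\<pi> l = l" using permutes_not_in[OF pp] by simp
      thus "k (\<pi> l) = 0" using kn l unfolding nabla_anti_def by auto
    qed
    show "\<Phi> (\<pi>, k) \<in> Z"
      unfolding Z_def \<Phi>_def using A1 A2 by simp
  qed
  have "fact (card (I d)) * sum g F = (\<Sum>\<pi>\<in>P. \<Sum>k\<in>F. g k)"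
    using cardP A_def by simp
  also have "\<dots> = (\<Sum>\<pi>\<in>P. \<Sum>k\<in>F. g (\<Phi> (\<pi>, k)))"
    unfolding \<Phi>_def using gperm by simp
  also have "\<dots> = (\<Sum>(\<pi>,k)\<in>P \<times> F. g (\<Phi> (\<pi>, k)))"
    by (rule sum.cartesian_product)
  also have "\<dots> = sum (g \<circ> \<Phi>) (P \<times> F)"
    by (intro sum.cong) auto
  also have "\<dots> = sum g (\<Phi> ` (P \<times> F))"
    by (rule sum.reindex[OF inj, symmetric])
  also have "\<dots> \<le> sum g Z"
    by (rule sum_mono2[OF finZ sub]) (simp add: gnn)
  also have "\<dots> = sum (g \<circ> r) Q" using ZQ sum.reindex[OF injr, of g] by simp
  also have "\<dots> = (\<Sum>f\<in>Q. \<Prod>l\<in>{1..d}. \<mu> (f l))"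
    unfolding g_def r_def by (intro sum.cong refl prod.cong) auto
  also have "\<dots> = (\<Prod>l\<in>{1..d}. \<Sum>m\<in>{1..N}. \<mu> m)"
    unfolding Q_def by (rule prod_sum_PiE[symmetric]) auto
  also have "\<dots> = (\<Sum>m\<in>{1..N}. \<mu> m) ^ d" by simp
  also have "\<dots> \<le> (\<Sum>m. \<mu> (Suc m)) ^ d"
  proof (rule power_mono)
    have "{1..N} = Suc ` {..<N}" by (rule image_Suc_lessThan[symmetric])
    hence "(\<Sum>m\<in>{1..N}. \<mu> m) = (\<Sum>m<N. \<mu> (Suc m))" by (simp add: sum.reindex)
    also have "\<dots> \<le> (\<Sum>m. \<mu> (Suc m))" by (rule sum_le_suminf[OF sm]) (auto simp: nn)
    finally show "(\<Sum>m\<in>{1..N}. \<mu> m) \<le> (\<Sum>m. \<mu> (Suc m))" .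
    show "0 \<le> (\<Sum>m\<in>{1..N}. \<mu> m)" by (simp add: nn sum_nonneg)
  qed
  finally show ?thesis unfolding g_def .
qed


lemma finish:
  fixes A :: "'a set" and B :: real
  assumes "\<And>F. finite F \<Longrightarrow> F \<subseteq> A \<Longrightarrow> real (card F) \<le> B"
  shows "finite A \<and> real (card A) \<le> B"
proof (cases "finite A")
  case True thus ?thesis using assms by simp
next
  case False
  obtain F where F: "finite F" "card F = nat \<lceil>B\<rceil> + 1" "F \<subseteq> A"
    using infinite_arbitrarily_large[OF False] by blast
  then have "real (nat \<lceil>B\<rceil> + 1) \<le> B" using assms by metis
  moreover have "B \<le> real (nat \<lceil>B\<rceil>)" by (rule real_nat_ceiling_ge)
  ultimately show ?thesis by simp
qed

lemma tract:
  fixes lam :: "nat \<Rightarrow> real" and I :: "nat \<Rightarrow> nat set" and \<tau> C :: real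
  assumes Isub: "\<forall>d\<ge>1. I d \<subseteq> {1..d}" and tau: "\<tau> > 0"
    and sm: "summable (\<lambda>m. lam (Suc m) powr \<tau>)" and C: "C > 0"
    and bnd: "\<forall>d\<ge>1. (\<Sum>m. lam (Suc m) powr \<tau>) ^ d \<le> C * fact (card (I d))"
  shows "strongly_poly_tractable_anti lam I"
proof -
  have main: "finite (info_set_anti lam I \<epsilon> d) \<and> real (info_compl_anti lam I \<epsilon> d) \<le> C * \<epsilon> powr (-(2*\<tau>))"
    if d: "d \<ge> 1" and e: "0 < \<epsilon>" for d \<epsilon>
  proof -
    define \<mu> where "\<mu> = (\<lambda>m. lam m powr \<tau>)"
    have "real (card F) \<le> C * \<epsilon> powr (-(2*\<tau>))" if F: "finite F" "F \<subseteq> info_set_anti lam I \<epsilon> d" for F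
    proof -
      have Fn: "F \<subseteq> nabla_anti I d" using F(2) unfolding info_set_anti_def by auto
      have gk: "\<epsilon> powr (2*\<tau>) \<le> (\<Prod>l\<in>{1..d}. \<mu> (k l))" if kF: "k \<in> F" for k
      proof -
        have "\<epsilon>\<^sup>2 < lam_d lam d k" using kF F(2) unfolding info_set_anti_def by auto
        hence "(\<epsilon>\<^sup>2) powr \<tau> \<le> (lam_d lam d k) powr \<tau>" using tau by (intro powr_mono2) auto
        moreover have "(\<epsilon>\<^sup>2) powr \<tau> = \<epsilon> powr (2*\<tau>)"
        proof -
          have "\<epsilon> powr (2*\<tau>) = (\<epsilon> powr 2) powr \<tau>" by (simp add: powr_powr)
          thus ?thesis using e by simp
        qed
        moreover have "(lam_d lam d k) powr \<tau> = (\<Prod>l\<in>{1..d}. \<mu> (k l))"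
          unfolding lam_d_def \<mu>_def by (rule prod_powr_distrib)
        ultimately show ?thesis by simp
      qed
      have "real (card F) * \<epsilon> powr (2*\<tau>) = (\<Sum>k\<in>F. \<epsilon> powr (2*\<tau>))" by simp
      also have "\<dots> \<le> (\<Sum>k\<in>F. \<Prod>l\<in>{1..d}. \<mu> (k l))" using gk by (rule sum_mono)
      finally have c1: "real (card F) * \<epsilon> powr (2*\<tau>) \<le> (\<Sum>k\<in>F. \<Prod>l\<in>{1..d}. \<mu> (k l))" .
      have "fact (card (I d)) * (\<Sum>k\<in>F. \<Prod>l\<in>{1..d}. \<mu> (k l)) \<le> (\<Sum>m. \<mu> (Suc m)) ^ d"
        using Isub d F(1) Fn sm unfolding \<mu>_def by (intro key) auto
      also have "\<dots> \<le> C * fact (card (I d))" using bnd d unfolding \<mu>_def by auto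
      finally have "(\<Sum>k\<in>F. \<Prod>l\<in>{1..d}. \<mu> (k l)) \<le> C"
        by (smt (verit, best) fact_gt_zero mult.commute mult_le_cancel_left_pos)
      with c1 have "real (card F) * \<epsilon> powr (2*\<tau>) \<le> C" by linarith
      moreover have "\<epsilon> powr (2*\<tau>) > 0" using e by simp
      ultimately have "real (card F) \<le> C / \<epsilon> powr (2*\<tau>)" by (simp add: field_simps)
      thus ?thesis by (simp add: powr_minus divide_inverse)
    qed
    thus ?thesis unfolding info_compl_anti_def by (intro finish) auto
  qed
  show ?thesis unfolding strongly_poly_tractable_anti_def
    by (rule exI[of _ C], rule exI[of _ "2*\<tau>"]) (use main C tau in auto)
qed

lemma lam_le1:
  assumes eigs: "admissible_eigs lam"
  shows "0 \<le> lam (Suc m) \<and> lam (Suc m) \<le> lam 1"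
proof (induction m)
  case 0 show ?case using eigs unfolding admissible_eigs_def by auto
next
  case (Suc m)
  have "lam (Suc (Suc m)) \<le> lam (Suc m)" "0 \<le> lam (Suc (Suc m))"
    using eigs unfolding admissible_eigs_def by auto
  thus ?case using Suc by simp
qed

lemma summ:
  assumes eigs: "admissible_eigs lam" and l1: "lam 1 > 0" and tau0: "\<tau>\<^sub>0 > 0"
    and tt: "\<tau> \<ge> \<tau>\<^sub>0" and ell: "in_ell \<tau>\<^sub>0 lam"
  shows "summable (\<lambda>m. lam (Suc m) powr \<tau>)"
    and "(\<Sum>m. lam (Suc m) powr \<tau>) \<le> lam 1 powr (\<tau>-\<tau>\<^sub>0) * ell_norm_pow \<tau>\<^sub>0 lam"
proof -
  have pw: "lam (Suc m) powr \<tau> \<le> lam 1 powr (\<tau>-\<tau>\<^sub>0) * lam (Suc m) powr \<tau>\<^sub>0" for m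
  proof (cases "lam (Suc m) = 0")
    case True thus ?thesis by simp
  next
    case False
    have x: "0 < lam (Suc m)" "lam (Suc m) \<le> lam 1" using lam_le1[OF eigs, of m] False by auto
    have "lam (Suc m) powr \<tau> = lam (Suc m) powr (\<tau>-\<tau>\<^sub>0) * lam (Suc m) powr \<tau>\<^sub>0"
      by (simp add: powr_add[symmetric])
    also have "\<dots> \<le> lam 1 powr (\<tau>-\<tau>\<^sub>0) * lam (Suc m) powr \<tau>\<^sub>0"
      using x tt by (intro mult_right_mono powr_mono2) auto
    finally show ?thesis .
  qed
  have s0: "summable (\<lambda>m. lam 1 powr (\<tau>-\<tau>\<^sub>0) * lam (Suc m) powr \<tau>\<^sub>0)"
    using ell unfolding in_ell_def by (rule summable_mult)
  show sm: "summable (\<lambda>m. lam (Suc m) powr \<tau>)"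
    by (rule summable_comparison_test[OF _ s0]) (use pw in auto)
  have "(\<Sum>m. lam (Suc m) powr \<tau>) \<le> (\<Sum>m. lam 1 powr (\<tau>-\<tau>\<^sub>0) * lam (Suc m) powr \<tau>\<^sub>0)"
    by (rule suminf_le[OF pw sm s0])
  also have "\<dots> = lam 1 powr (\<tau>-\<tau>\<^sub>0) * ell_norm_pow \<tau>\<^sub>0 lam"
    unfolding ell_norm_pow_def using ell unfolding in_ell_def by (rule suminf_mult)
  finally show "(\<Sum>m. lam (Suc m) powr \<tau>) \<le> lam 1 powr (\<tau>-\<tau>\<^sub>0) * ell_norm_pow \<tau>\<^sub>0 lam" .
qed

theorem proposition6:
  fixes lam :: "nat \<Rightarrow> real" and I :: "nat \<Rightarrow> nat set" and \<tau>\<^sub>0 :: real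
  assumes eigs: "admissible_eigs lam"
    and idx: "admissible_index_sets I"
    and lam2: "lam 2 > 0"
    and init: "\<forall>d\<ge>1. init_err_sq_anti lam I d > 0"
    and tau0: "\<tau>\<^sub>0 > 0"
    and ell: "in_ell \<tau>\<^sub>0 lam"
  shows "(lam 1 < 1 \<longrightarrow> strongly_poly_tractable_anti lam I)
       \<and> ((lam 1 \<ge> 1 \<and> (\<exists>\<tau> d\<^sub>0::nat. \<tau> \<ge> \<tau>\<^sub>0 \<and>
             (\<forall>d\<ge>d\<^sub>0. d \<ge> 1 \<longrightarrow> ln (fact (card (I d))) / real d \<ge> ln (ell_norm_pow \<tau> lam))))
          \<longrightarrow> strongly_poly_tractable_anti lam I)"
proof (intro conjI impI)
  have Isub: "\<forall>d\<ge>1. I d \<subseteq> {1..d}" using idx unfolding admissible_index_sets_def by auto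
  have l1: "lam 1 > 0" using lam2 eigs unfolding admissible_eigs_def
    by (metis One_nat_def less_le_trans numeral_2_eq_2 order.refl)
  define S0 where "S0 = ell_norm_pow \<tau>\<^sub>0 lam"
  have S0nn: "S0 \<ge> 0" unfolding S0_def ell_norm_pow_def
    using ell unfolding in_ell_def by (intro suminf_nonneg) auto
  {
    assume lt: "lam 1 < 1"
    define t where "t = (if S0 \<le> 1 then 0 else ln S0 / (- ln (lam 1)))"
    have lnl: "ln (lam 1) < 0" using l1 lt by simp
    have t0: "t \<ge> 0"
    proof (cases "S0 \<le> 1")
      case True thus ?thesis unfolding t_def by simp
    next
      case False
      hence "ln S0 > 0" by simp
      thus ?thesis unfolding t_def using False lnl by (simp add: divide_nonneg_neg)
    qed
    have key1: "lam 1 powr t * S0 \<le> 1"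
    proof (cases "S0 \<le> 1")
      case True thus ?thesis unfolding t_def using l1 by simp
    next
      case False
      have "lam 1 powr t = exp (t * ln (lam 1))" using l1 by (simp add: powr_def)
      also have "t * ln (lam 1) = - ln S0" unfolding t_def using False lnl by (simp add: field_simps)
      finally have "lam 1 powr t = inverse S0" using False by (simp add: exp_minus)
      thus ?thesis using False by simp
    qed
    define \<tau> where "\<tau> = \<tau>\<^sub>0 + t"
    have tt: "\<tau> \<ge> \<tau>\<^sub>0" "\<tau> > 0" using t0 tau0 \<tau>_def by auto
    note ss = summ[OF eigs l1 tau0 tt(1) ell]
    have Sle: "(\<Sum>m. lam (Suc m) powr \<tau>) \<le> 1" using ss(2) key1 unfolding \<tau>_def S0_def by simp
    have Snn: "(\<Sum>m. lam (Suc m) powr \<tau>) \<ge> 0" using ss(1) by (intro suminf_nonneg) auto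
    show "strongly_poly_tractable_anti lam I"
    proof (rule tract[OF Isub tt(2) ss(1), of 1])
      show "\<forall>d\<ge>1. (\<Sum>m. lam (Suc m) powr \<tau>) ^ d \<le> 1 * fact (card (I d))"
      proof (intro allI impI)
        fix d :: nat
        have "(\<Sum>m. lam (Suc m) powr \<tau>) ^ d \<le> 1" using Sle Snn by (simp add: power_le_one)
        also have "1 \<le> (fact (card (I d)) :: real)" by simp
        finally show "(\<Sum>m. lam (Suc m) powr \<tau>) ^ d \<le> 1 * fact (card (I d))" by simp
      qed
    qed simp
  }
  {
    assume as: "lam 1 \<ge> 1 \<and> (\<exists>\<tau> d\<^sub>0::nat. \<tau> \<ge> \<tau>\<^sub>0 \<and>
             (\<forall>d\<ge>d\<^sub>0. d \<ge> 1 \<longrightarrow> ln (fact (card (I d))) / real d \<ge> ln (ell_norm_pow \<tau> lam)))"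
    then obtain \<tau> d\<^sub>0 where tt: "\<tau> \<ge> \<tau>\<^sub>0" and hd: "\<forall>d\<ge>d\<^sub>0. d \<ge> 1 \<longrightarrow> ln (fact (card (I d))) / real d \<ge> ln (ell_norm_pow \<tau> lam)"
      and ge1: "lam 1 \<ge> 1" by blast
    note ss = summ[OF eigs l1 tau0 tt ell]
    define S where "S = ell_norm_pow \<tau> lam"
    have "lam 1 powr \<tau> \<le> S"
    proof -
      have "(\<Sum>m<1. lam (Suc m) powr \<tau>) \<le> S" unfolding S_def ell_norm_pow_def
        by (rule sum_le_suminf[OF ss(1)]) auto
      thus ?thesis by simp
    qed
    moreover have "1 \<le> lam 1 powr \<tau>" using ge1 tt tau0 by (intro ge_one_powr_ge_zero) auto
    ultimately have S1: "S \<ge> 1" by simp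
    have tpos: "\<tau> > 0" using tt tau0 by simp
    show "strongly_poly_tractable_anti lam I"
    proof (rule tract[OF Isub tpos ss(1), of "S ^ d\<^sub>0"])
      show "S ^ d\<^sub>0 > 0" using S1 by simp
      show "\<forall>d\<ge>1. (\<Sum>m. lam (Suc m) powr \<tau>) ^ d \<le> S ^ d\<^sub>0 * fact (card (I d))"
      proof (intro allI impI)
        fix d :: nat assume d: "d \<ge> 1"
        have Sd: "(\<Sum>m. lam (Suc m) powr \<tau>) = S" unfolding S_def ell_norm_pow_def ..
        have f1: "(1::real) \<le> fact (card (I d))" by simp
        have C1: "1 \<le> S ^ d\<^sub>0" using S1 by simp
        show "(\<Sum>m. lam (Suc m) powr \<tau>) ^ d \<le> S ^ d\<^sub>0 * fact (card (I d))"
        proof (cases "d \<ge> d\<^sub>0")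
          case True
          have "ln (fact (card (I d))) / real d \<ge> ln S" using hd True d S_def by auto
          hence "real d * ln S \<le> ln (fact (card (I d)))" using d by (simp add: field_simps)
          hence "ln (S ^ d) \<le> ln (fact (card (I d)))" using S1 by (simp add: ln_realpow)
          hence "S ^ d \<le> fact (card (I d))" using S1 by (subst (asm) ln_le_cancel_iff) auto
          also have "\<dots> \<le> S ^ d\<^sub>0 * fact (card (I d))" using C1 by simp
          finally show ?thesis using Sd by simp
        next
          case False
          have "S ^ d \<le> S ^ d\<^sub>0" using False S1 by (intro power_increasing) auto
          also have "\<dots> \<le> S ^ d\<^sub>0 * fact (card (I d))" using C1 f1 by simp
          finally show ?thesis using Sd by simp
        qed
      qed
    qed
  }
qed

end
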